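(* Let $\langle A, \leq, \otimes, \ominus, \mathbf{1}\rangle$ be a residuated partially ordered monoid with bottom element $\bot$. Then for every $k\geq1$, $\langle Lex_k(A), \leq_k, \otimes^k, \ominus_k, \mathbf{1}^k\rangle$ is a residuated partially ordered monoid, where for $a=a_1\ldots a_k$, $b=b_1\ldots b_k\in Lex_k(A)$: $$a \ominus_k b = \begin{cases} (a_1 \ominus b_1) \ldots (a_k \ominus b_k) & \text{if } k+1 = \gamma(a,b) = \delta(a,b),\\ (a_1 \ominus b_1) \ldots (a_{\gamma(a,b)} \ominus b_{\gamma(a,b)})\,\bot^{k-\gamma(a,b)} & \text{if } k+1 \neq \gamma(a,b) \leq \delta(a,b),\\ (a_1 \ominus b_1) \ldots (a_{\delta(a,b)} \ominus b_{\delta(a,b)})\,\big(\bigvee Lex_{k-\delta(a,b)}(A)\big) & \text{otherwise.}\end{cases}$$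
   Context: A residuated partially ordered monoid $\langle A, \leq, \otimes, \ominus, \mathbf{1}\rangle$ consists of a partial order $\langle A,\leq\rangle$, a commutative monoid $\langle A,\otimes,\mathbf{1}\rangle$, and a binary operation $\ominus$ with $b \otimes c \leq a$ iff $c \leq a \ominus b$ for all $a,b,c\in A$. $a<b$ means $a\leq b$, $a\neq b$. $I(A) = \{c \in A \mid \forall a,b \in A.\ a \otimes c = b \otimes c \Rightarrow a = b\}$, $C(A)=A\setminus I(A)$. $Lex_k(A)\subseteq A^k$: $Lex_1(A) = A$, $Lex_{k+1}(A) = I(A)\, Lex_k(A) \cup C(A)\{\bot\}^k$ (concatenations of sequences; $\{\bot\}^k$ the singleton of $k$ copies of $\bot$). The order $\leq_k$: $\leq_1=\leq$, and for $k\geq2$, $a_1 \ldots a_k \leq_k b_1 \ldots b_k$ iff $a_1 < b_1$, or $a_1 = b_1$ and $a_2 \ldots a_k \leq_{k-1} b_2 \ldots b_k$. $\otimes^k$ is componentwise, $\mathbf{1}^k=\mathbf{1}\ldots\mathbf{1}$; $\bot^n$ is the sequence of $n$ copies of $\bot$; $\bigvee Lex_n(A)$ denotes the greatest element of $Lex_n(A)$ w.r.t. $\leq_n$ (the empty sequence when $n=0$). For $a,b\in Lex_k(A)$: $\gamma(a,b) = \min\{ i \mid a_i \ominus b_i \in C(A)\}$ and $\delta(a,b) = \min\{ i \mid (a_i \ominus b_i) \otimes b_i < a_i\}$, each equal to $k+1$ if the set is empty. *)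

theory Defs
  imports Main
begin

definition rpom :: "'a set \<Rightarrow> ('a \<Rightarrow> 'a \<Rightarrow> bool) \<Rightarrow> ('a \<Rightarrow> 'a \<Rightarrow> 'a)
    \<Rightarrow> ('a \<Rightarrow> 'a \<Rightarrow> 'a) \<Rightarrow> 'a \<Rightarrow> bool" where
  "rpom A le mult res one \<longleftrightarrow>
     (\<forall>a\<in>A. le a a) \<and>
     (\<forall>a\<in>A. \<forall>b\<in>A. le a b \<and> le b a \<longrightarrow> a = b) \<and>
     (\<forall>a\<in>A. \<forall>b\<in>A. \<forall>c\<in>A. le a b \<and> le b c \<longrightarrow> le a c) \<and>
     one \<in> A \<and>
     (\<forall>a\<in>A. \<forall>b\<in>A. mult a b \<in> A) \<and>
     (\<forall>a\<in>A. \<forall>b\<in>A. res a b \<in> A) \<and>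
     (\<forall>a\<in>A. \<forall>b\<in>A. \<forall>c\<in>A. mult (mult a b) c = mult a (mult b c)) \<and>
     (\<forall>a\<in>A. \<forall>b\<in>A. mult a b = mult b a) \<and>
     (\<forall>a\<in>A. mult one a = a) \<and>
     (\<forall>a\<in>A. \<forall>b\<in>A. \<forall>c\<in>A. le (mult b c) a \<longleftrightarrow> le c (res a b))"

definition canc :: "'a set \<Rightarrow> ('a \<Rightarrow> 'a \<Rightarrow> 'a) \<Rightarrow> 'a set" where
  "canc A mult = {c\<in>A. \<forall>a\<in>A. \<forall>b\<in>A. mult a c = mult b c \<longrightarrow> a = b}"

definition noncanc :: "'a set \<Rightarrow> ('a \<Rightarrow> 'a \<Rightarrow> 'a) \<Rightarrow> 'a set" where
  "noncanc A mult = A - canc A mult"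

(* Lex_k(A) as a set of lists of length k; Lex_0(A) = {[]}, and Lex_1(A) = {[a] | a \<in> A}
   agrees with the paper's Lex_1(A) = A. *)
fun Lex :: "'a set \<Rightarrow> ('a \<Rightarrow> 'a \<Rightarrow> 'a) \<Rightarrow> 'a \<Rightarrow> nat \<Rightarrow> 'a list set" where
  "Lex A mult bt 0 = {[]}"
| "Lex A mult bt (Suc k) =
     {c # x | c x. c \<in> canc A mult \<and> x \<in> Lex A mult bt k}
     \<union> {c # replicate k bt | c. c \<in> noncanc A mult}"

fun lex_le :: "('a \<Rightarrow> 'a \<Rightarrow> bool) \<Rightarrow> 'a list \<Rightarrow> 'a list \<Rightarrow> bool" where
  "lex_le le [] [] = True"
| "lex_le le (a # as) (b # bs) = ((le a b \<and> a \<noteq> b) \<or> (a = b \<and> lex_le le as bs))"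
| "lex_le le _ _ = False"

definition lex_top :: "'a set \<Rightarrow> ('a \<Rightarrow> 'a \<Rightarrow> bool) \<Rightarrow> ('a \<Rightarrow> 'a \<Rightarrow> 'a) \<Rightarrow> 'a \<Rightarrow> nat \<Rightarrow> 'a list" where
  "lex_top A le mult bt n =
     (THE x. x \<in> Lex A mult bt n \<and> (\<forall>y\<in>Lex A mult bt n. lex_le le y x))"

definition gam :: "'a set \<Rightarrow> ('a \<Rightarrow> 'a \<Rightarrow> 'a) \<Rightarrow> ('a \<Rightarrow> 'a \<Rightarrow> 'a) \<Rightarrow> nat
    \<Rightarrow> 'a list \<Rightarrow> 'a list \<Rightarrow> nat" where
  "gam A mult res k a b =
     (if \<exists>i\<in>{1..k}. res (a ! (i-1)) (b ! (i-1)) \<in> noncanc A mult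
      then LEAST i. i \<in> {1..k} \<and> res (a ! (i-1)) (b ! (i-1)) \<in> noncanc A mult
      else k + 1)"

definition dlt :: "('a \<Rightarrow> 'a \<Rightarrow> bool) \<Rightarrow> ('a \<Rightarrow> 'a \<Rightarrow> 'a) \<Rightarrow> ('a \<Rightarrow> 'a \<Rightarrow> 'a) \<Rightarrow> nat
    \<Rightarrow> 'a list \<Rightarrow> 'a list \<Rightarrow> nat" where
  "dlt le mult res k a b =
     (let P = (\<lambda>i. le (mult (res (a ! (i-1)) (b ! (i-1))) (b ! (i-1))) (a ! (i-1))
                  \<and> mult (res (a ! (i-1)) (b ! (i-1))) (b ! (i-1)) \<noteq> a ! (i-1))
      in if \<exists>i\<in>{1..k}. P i then LEAST i. i \<in> {1..k} \<and> P i else k + 1)"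

definition lex_res :: "'a set \<Rightarrow> ('a \<Rightarrow> 'a \<Rightarrow> bool) \<Rightarrow> ('a \<Rightarrow> 'a \<Rightarrow> 'a) \<Rightarrow> ('a \<Rightarrow> 'a \<Rightarrow> 'a)
    \<Rightarrow> 'a \<Rightarrow> nat \<Rightarrow> 'a list \<Rightarrow> 'a list \<Rightarrow> 'a list" where
  "lex_res A le mult res bt k a b =
     (let g = gam A mult res k a b; d = dlt le mult res k a b; r = map2 res a b in
      if k + 1 = g \<and> g = d then r
      else if k + 1 \<noteq> g \<and> g \<le> d then take g r @ replicate (k - g) bt
      else take d r @ lex_top A le mult bt (k - d))"

end

theory Submission
  imports Defs
begin

definition firstidx :: "nat \<Rightarrow> (nat \<Rightarrow> bool) \<Rightarrow> nat" where
  "firstidx k P = (if \<exists>i\<in>{1..k}. P i then LEAST i. i \<in> {1..k} \<and> P i else k + 1)"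

lemma firstidx_cong:
  assumes "\<And>j. j \<in> {1..k} \<Longrightarrow> P j = Q j"
  shows "firstidx k P = firstidx k Q"
proof -
  have "(\<exists>i\<in>{1..k}. P i) = (\<exists>i\<in>{1..k}. Q i)" using assms by auto
  moreover have "(\<lambda>i. i \<in> {1..k} \<and> P i) = (\<lambda>i. i \<in> {1..k} \<and> Q i)" using assms by auto
  ultimately show ?thesis unfolding firstidx_def by simp
qed

lemma firstidx_Suc:
  "firstidx (Suc k) P = (if P 1 then 1 else Suc (firstidx k (\<lambda>j. P (Suc j))))"
proof (cases "P 1")
  case True
  then have "(LEAST i. i \<in> {1..Suc k} \<and> P i) = 1"
    by (intro Least_equality) auto
  then show ?thesis using True unfolding firstidx_def by auto
next
  case False
  show ?thesis
  proof (cases "\<exists>i\<in>{1..k}. P (Suc i)")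
    case True
    then obtain i where i: "i \<in> {1..k}" "P (Suc i)" by auto
    have ex: "\<exists>i\<in>{1..Suc k}. P i" using i by (intro bexI[of _ "Suc i"]) auto
    have "(LEAST i. i \<in> {1..Suc k} \<and> P i) = Suc (LEAST m. Suc m \<in> {1..Suc k} \<and> P (Suc m))"
      by (rule Least_Suc[where n="Suc i"]) (use i in auto)
    also have "(\<lambda>m. Suc m \<in> {1..Suc k} \<and> P (Suc m)) = (\<lambda>m. m \<le> k \<and> P (Suc m))" by auto
    also have "(LEAST m. m \<le> k \<and> P (Suc m)) = (LEAST m. m \<in> {1..k} \<and> P (Suc m))"
    proof -
      have "(LEAST m. m \<le> k \<and> P (Suc m)) = Suc (LEAST m. Suc m \<le> k \<and> P (Suc (Suc m)))"
        by (rule Least_Suc[where n=i]) (use i False in auto)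
      moreover have "(LEAST m. m \<in> {1..k} \<and> P (Suc m)) = Suc (LEAST m. Suc m \<in> {1..k} \<and> P (Suc (Suc m)))"
        by (rule Least_Suc[where n=i]) (use i False in auto)
      moreover have "(\<lambda>m. Suc m \<in> {1..k} \<and> P (Suc (Suc m))) = (\<lambda>m. Suc m \<le> k \<and> P (Suc (Suc m)))" by auto
      ultimately show ?thesis by simp
    qed
    finally show ?thesis using True False ex unfolding firstidx_def by auto
  next
    case F2: False
    have "\<not> (\<exists>i\<in>{1..Suc k}. P i)"
    proof
      assume "\<exists>i\<in>{1..Suc k}. P i"
      then obtain i where "i \<in> {1..Suc k}" "P i" by auto
      with False F2 show False by (cases i) (auto simp: Suc_le_eq)
    qed
    then show ?thesis using False F2 unfolding firstidx_def by auto
  qed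
qed

lemma gam_firstidx:
  "gam A mult res k a b = firstidx k (\<lambda>i. res (a ! (i-1)) (b ! (i-1)) \<in> noncanc A mult)"
  unfolding gam_def firstidx_def by simp

lemma dlt_firstidx:
  "dlt le mult res k a b = firstidx k (\<lambda>i. le (mult (res (a ! (i-1)) (b ! (i-1))) (b ! (i-1))) (a ! (i-1))
                  \<and> mult (res (a ! (i-1)) (b ! (i-1))) (b ! (i-1)) \<noteq> a ! (i-1))"
  unfolding dlt_def firstidx_def Let_def by simp

lemma gam_Cons:
  "gam A mult res (Suc k) (a1 # a) (b1 # b) =
    (if res a1 b1 \<in> noncanc A mult then 1 else Suc (gam A mult res k a b))"
  unfolding gam_firstidx firstidx_Suc
  by (auto intro!: firstidx_cong)

lemma dlt_Cons:
  "dlt le mult res (Suc k) (a1 # a) (b1 # b) =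
    (if le (mult (res a1 b1) b1) a1 \<and> mult (res a1 b1) b1 \<noteq> a1 then 1 else Suc (dlt le mult res k a b))"
  unfolding dlt_firstidx firstidx_Suc
  by (auto intro!: firstidx_cong)

lemma firstidx_le: "firstidx k P \<le> k + 1"
proof (cases "\<exists>i\<in>{1..k}. P i")
  case True
  then obtain i where "i \<in> {1..k}" "P i" by auto
  then have "(LEAST i. i \<in> {1..k} \<and> P i) \<le> i" by (intro Least_le) auto
  then show ?thesis using True \<open>i \<in> {1..k}\<close> unfolding firstidx_def by auto
qed (auto simp: firstidx_def)

lemma firstidx_ge1: "1 \<le> firstidx k P"
proof (cases "\<exists>i\<in>{1..k}. P i")
  case True
  then obtain i where "i \<in> {1..k}" "P i" by auto
  then have "(LEAST i. i \<in> {1..k} \<and> P i) \<in> {1..k}" by (metis (mono_tags, lifting) LeastI)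
  then show ?thesis using True unfolding firstidx_def by auto
qed (auto simp: firstidx_def)

lemma lex_res_Cons:
  "lex_res A le mult res bt (Suc k) (a1 # a) (b1 # b) =
    (if res a1 b1 \<in> noncanc A mult then res a1 b1 # replicate k bt
     else if le (mult (res a1 b1) b1) a1 \<and> mult (res a1 b1) b1 \<noteq> a1
       then res a1 b1 # lex_top A le mult bt k
     else res a1 b1 # lex_res A le mult res bt k a b)"
proof -
  obtain g where g: "gam A mult res k a b = g" by blast
  obtain d where d: "dlt le mult res k a b = d" by blast
  have "g \<le> k + 1" unfolding g[symmetric] gam_firstidx by (rule firstidx_le)
  moreover have "d \<le> k + 1" unfolding d[symmetric] dlt_firstidx by (rule firstidx_le)
  moreover have "1 \<le> g" unfolding g[symmetric] gam_firstidx by (rule firstidx_ge1)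
  moreover have "1 \<le> d" unfolding d[symmetric] dlt_firstidx by (rule firstidx_ge1)
  ultimately show ?thesis
  proof (cases "res a1 b1 \<in> noncanc A mult")
    case True
    then show ?thesis unfolding lex_res_def Let_def gam_Cons dlt_Cons by simp
  next
    case F: False
    show ?thesis
    proof (cases "le (mult (res a1 b1) b1) a1 \<and> mult (res a1 b1) b1 \<noteq> a1")
      case True
      then show ?thesis using F \<open>1 \<le> g\<close> unfolding lex_res_def Let_def gam_Cons dlt_Cons g d by simp
    next
      case False
      have e: "Suc k - Suc g = k - g" "Suc k - Suc d = k - d" by simp_all
      show ?thesis using F False unfolding lex_res_def Let_def gam_Cons dlt_Cons g d
        by (simp only: if_False if_True e take_Suc_Cons list.map zip_Cons_Cons split append_Cons
           Suc_inject nat.inject add_Suc Suc_le_mono simp_thms, simp)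
    qed
  qed
qed

lemma lex_res_0: "lex_res A le mult res bt 0 [] [] = []"
  unfolding lex_res_def gam_def dlt_def Let_def by simp


lemma lex_le_refl: "lex_le le x x"
  by (induction x) auto

lemma lex_le_Nil_iff1 [simp]: "lex_le le [] y = (y = [])"
  by (cases y) simp_all

lemma lex_le_Nil_iff2 [simp]: "lex_le le x [] = (x = [])"
  by (cases x) simp_all

locale rp =
  fixes A :: "'a set" and le :: "'a \<Rightarrow> 'a \<Rightarrow> bool"
    and mult res :: "'a \<Rightarrow> 'a \<Rightarrow> 'a" and one bt :: 'a
  assumes R: "rpom A le mult res one"
    and bt: "bt \<in> A" and bot: "\<forall>a\<in>A. le bt a"
begin

lemma refl: "a \<in> A \<Longrightarrow> le a a" using R[unfolded rpom_def, THEN conjunct1] by blast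
lemma antisym: "a \<in> A \<Longrightarrow> b \<in> A \<Longrightarrow> le a b \<Longrightarrow> le b a \<Longrightarrow> a = b" using R[unfolded rpom_def, THEN conjunct2, THEN conjunct1] by blast
lemma trans: "a \<in> A \<Longrightarrow> b \<in> A \<Longrightarrow> c \<in> A \<Longrightarrow> le a b \<Longrightarrow> le b c \<Longrightarrow> le a c" using R[unfolded rpom_def, THEN conjunct2, THEN conjunct2, THEN conjunct1] by blast
lemma one_in: "one \<in> A" using R[unfolded rpom_def, THEN conjunct2, THEN conjunct2, THEN conjunct2, THEN conjunct1] .
lemma mult_in: "a \<in> A \<Longrightarrow> b \<in> A \<Longrightarrow> mult a b \<in> A" using R[unfolded rpom_def, THEN conjunct2, THEN conjunct2, THEN conjunct2, THEN conjunct2, THEN conjunct1] by blast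
lemma res_in: "a \<in> A \<Longrightarrow> b \<in> A \<Longrightarrow> res a b \<in> A" using R[unfolded rpom_def, THEN conjunct2, THEN conjunct2, THEN conjunct2, THEN conjunct2, THEN conjunct2, THEN conjunct1] by blast
lemma assoc: "a \<in> A \<Longrightarrow> b \<in> A \<Longrightarrow> c \<in> A \<Longrightarrow> mult (mult a b) c = mult a (mult b c)" using R[unfolded rpom_def, THEN conjunct2, THEN conjunct2, THEN conjunct2, THEN conjunct2, THEN conjunct2, THEN conjunct2, THEN conjunct1] by blast
lemma comm: "a \<in> A \<Longrightarrow> b \<in> A \<Longrightarrow> mult a b = mult b a" using R[unfolded rpom_def, THEN conjunct2, THEN conjunct2, THEN conjunct2, THEN conjunct2, THEN conjunct2, THEN conjunct2, THEN conjunct2, THEN conjunct1] by blast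
lemma unit: "a \<in> A \<Longrightarrow> mult one a = a" using R[unfolded rpom_def, THEN conjunct2, THEN conjunct2, THEN conjunct2, THEN conjunct2, THEN conjunct2, THEN conjunct2, THEN conjunct2, THEN conjunct2, THEN conjunct1] by blast
lemma resid: "a \<in> A \<Longrightarrow> b \<in> A \<Longrightarrow> c \<in> A \<Longrightarrow> le (mult b c) a \<longleftrightarrow> le c (res a b)" using R[unfolded rpom_def, THEN conjunct2, THEN conjunct2, THEN conjunct2, THEN conjunct2, THEN conjunct2, THEN conjunct2, THEN conjunct2, THEN conjunct2, THEN conjunct2] by blast

lemma bot_le: "a \<in> A \<Longrightarrow> le bt a" using bot by blast

lemma mono: assumes "b \<in> A" "b' \<in> A" "c \<in> A" "le b b'" shows "le (mult b c) (mult b' c)"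
proof -
  have cb': "mult c b' \<in> A" using mult_in assms by blast
  have r: "res (mult c b') c \<in> A" using res_in cb' assms by blast
  have "le b' (res (mult c b') c)" using resid[OF cb' assms(3) assms(2)] refl[OF cb'] by blast
  then have "le b (res (mult c b') c)" using trans[OF assms(1) assms(2) r] assms(4) by blast
  then have "le (mult c b) (mult c b')" using resid[OF cb' assms(3) assms(1)] by blast
  then show ?thesis using comm assms by simp
qed

lemma res_mult: "a \<in> A \<Longrightarrow> b \<in> A \<Longrightarrow> le (mult (res a b) b) a"
proof -
  assume a: "a \<in> A" and b: "b \<in> A"
  have r: "res a b \<in> A" using res_in a b by blast
  have "le (mult b (res a b)) a" using resid[OF a b r] refl[OF r] by blast
  then show ?thesis using comm[OF b r] by simp
qed

lemma bt_mult: "c \<in> A \<Longrightarrow> mult bt c = bt"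
proof -
  assume c: "c \<in> A"
  have "le (mult c bt) bt" using resid[of bt c bt] bot_le res_in c bt by blast
  moreover have "le bt (mult c bt)" using bot_le mult_in c bt by blast
  ultimately have "mult c bt = bt" using antisym[of "mult c bt" bt] mult_in c bt by blast
  then show ?thesis using comm c bt by simp
qed

lemma canc_sub: "canc A mult \<subseteq> A" and noncanc_sub: "noncanc A mult \<subseteq> A"
  unfolding canc_def noncanc_def by auto

lemma canc_or: "x \<in> A \<Longrightarrow> x \<notin> noncanc A mult \<Longrightarrow> x \<in> canc A mult"
  unfolding noncanc_def by auto

lemma canc_noncanc: "x \<in> canc A mult \<Longrightarrow> x \<notin> noncanc A mult"
  unfolding noncanc_def by auto

lemma canc_mult: assumes "x \<in> canc A mult" "y \<in> canc A mult" shows "mult x y \<in> canc A mult"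
proof -
  have xA: "x \<in> A" and yA: "y \<in> A" using assms canc_sub by auto
  { fix a b assume a: "a \<in> A" and b: "b \<in> A" and e: "mult a (mult x y) = mult b (mult x y)"
    then have "mult (mult a x) y = mult (mult b x) y" using assoc xA yA by metis
    then have "mult a x = mult b x" using assms(2) a b xA mult_in unfolding canc_def by blast
    then have "a = b" using assms(1) a b unfolding canc_def by blast }
  then show ?thesis unfolding canc_def using mult_in xA yA by blast
qed

lemma noncanc_mult: assumes "x \<in> noncanc A mult" "y \<in> A" shows "mult x y \<in> noncanc A mult"
proof (rule ccontr)
  have xA: "x \<in> A" using assms noncanc_sub by auto
  assume "mult x y \<notin> noncanc A mult"
  then have c: "mult x y \<in> canc A mult" using canc_or mult_in xA assms by blast
  { fix a b assume a: "a \<in> A" and b: "b \<in> A" and e: "mult a x = mult b x"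
    then have "mult a (mult x y) = mult b (mult x y)" using assoc xA assms by metis
    then have "a = b" using c a b unfolding canc_def by blast }
  then have "x \<in> canc A mult" unfolding canc_def using xA by blast
  then show False using assms canc_noncanc by blast
qed

abbreviation L where "L k \<equiv> Lex A mult bt k"

lemma Lex_Cons_iff: "c # x \<in> L (Suc k) \<longleftrightarrow>
   (c \<in> canc A mult \<and> x \<in> L k) \<or> (c \<in> noncanc A mult \<and> x = replicate k bt)"
  by auto

lemma Lex_props: "x \<in> L k \<Longrightarrow> length x = k \<and> set x \<subseteq> A"
proof (induction k arbitrary: x)
  case 0 then show ?case by simp
next
  case (Suc k)
  from Suc.prems have "(\<exists>c x'. x = c # x' \<and> c \<in> canc A mult \<and> x' \<in> L k) \<or>
      (\<exists>c. x = c # replicate k bt \<and> c \<in> noncanc A mult)" by simp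
  then show ?case
  proof
    assume "\<exists>c x'. x = c # x' \<and> c \<in> canc A mult \<and> x' \<in> L k"
    then obtain c x' where "x = c # x'" "c \<in> canc A mult" "x' \<in> L k" by blast
    then show ?case using Suc.IH canc_sub by auto
  next
    assume "\<exists>c. x = c # replicate k bt \<and> c \<in> noncanc A mult"
    then obtain c where "x = c # replicate k bt" "c \<in> noncanc A mult" by blast
    then show ?case using noncanc_sub bt by auto
  qed
qed

lemma rep_Lex: "replicate k bt \<in> L k"
proof (induction k)
  case (Suc k)
  then show ?case using bt canc_or by (cases "bt \<in> noncanc A mult") auto
qed simp

lemma Lex_SucE:
  assumes "x \<in> L (Suc k)"
  obtains c x' where "x = c # x'" "c \<in> A" "x' \<in> L k"
    "c \<in> noncanc A mult \<Longrightarrow> x' = replicate k bt"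
    "c \<notin> noncanc A mult \<Longrightarrow> c \<in> canc A mult"
proof -
  from assms have "(\<exists>c x'. x = c # x' \<and> c \<in> canc A mult \<and> x' \<in> L k) \<or>
      (\<exists>c. x = c # replicate k bt \<and> c \<in> noncanc A mult)" by simp
  then show thesis
  proof
    assume "\<exists>c x'. x = c # x' \<and> c \<in> canc A mult \<and> x' \<in> L k"
    then obtain c x' where h: "x = c # x'" "c \<in> canc A mult" "x' \<in> L k" by blast
    have "c \<in> A" using h(2) canc_sub by blast
    moreover have "c \<notin> noncanc A mult" using h(2) canc_noncanc by blast
    ultimately show thesis using that[OF h(1)] h(2,3) by blast
  next
    assume "\<exists>c. x = c # replicate k bt \<and> c \<in> noncanc A mult"
    then obtain c where h: "x = c # replicate k bt" "c \<in> noncanc A mult" by blast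
    have "c \<in> A" using h(2) noncanc_sub by blast
    then show thesis using that[OF h(1)] h(2) rep_Lex by blast
  qed
qed

lemma rep_le: "length x = k \<Longrightarrow> set x \<subseteq> A \<Longrightarrow> lex_le le (replicate k bt) x"
proof (induction x arbitrary: k)
  case Nil then show ?case by simp
next
  case (Cons a x)
  then show ?case using bot_le by (cases k) auto
qed

lemma lex_antisym: "length x = length y \<Longrightarrow> set x \<subseteq> A \<Longrightarrow> set y \<subseteq> A \<Longrightarrow>
   lex_le le x y \<Longrightarrow> lex_le le y x \<Longrightarrow> x = y"
proof (induction x arbitrary: y)
  case Nil then show ?case by simp
next
  case (Cons a x)
  then obtain b y' where y: "y = b # y'" by (cases y) auto
  with Cons show ?case using antisym by auto
qed

lemma lex_trans: "length x = length y \<Longrightarrow> length y = length z \<Longrightarrow> set x \<subseteq> A \<Longrightarrow> set y \<subseteq> A \<Longrightarrow> set z \<subseteq> A \<Longrightarrow>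
   lex_le le x y \<Longrightarrow> lex_le le y z \<Longrightarrow> lex_le le x z"
proof (induction x arbitrary: y z)
  case Nil then show ?case by (cases y; cases z) auto
next
  case (Cons a x)
  obtain b y' where y: "y = b # y'" using Cons.prems(1) by (cases y) auto
  obtain c z' where z: "z = c # z'" using Cons.prems(2) y by (cases z) auto
  have a: "a \<in> A" using Cons.prems(3) by simp
  have b: "b \<in> A" using Cons.prems(4) y by simp
  have c: "c \<in> A" using Cons.prems(5) z by simp
  have l: "length x = length y'" "length y' = length z'" using Cons.prems(1,2) y z by simp_all
  have s: "set x \<subseteq> A" "set y' \<subseteq> A" "set z' \<subseteq> A" using Cons.prems(3,4,5) y z by simp_all
  have h1: "(le a b \<and> a \<noteq> b) \<or> (a = b \<and> lex_le le x y')" using Cons.prems(6) y by simp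
  have h2: "(le b c \<and> b \<noteq> c) \<or> (b = c \<and> lex_le le y' z')" using Cons.prems(7) y z by simp
  have IH: "lex_le le x y' \<Longrightarrow> lex_le le y' z' \<Longrightarrow> lex_le le x z'" using Cons.IH l s by blast
  have "(le a c \<and> a \<noteq> c) \<or> (a = c \<and> lex_le le x z')"
  proof (cases "a = b")
    case True
    then have xy: "lex_le le x y'" using h1 by simp
    show ?thesis
    proof (cases "b = c")
      case True
      then show ?thesis using h2 xy IH \<open>a = b\<close> by simp
    next
      case False
      then show ?thesis using h2 \<open>a = b\<close> by simp
    qed
  next
    case ab: False
    then have lab: "le a b" using h1 by simp
    show ?thesis
    proof (cases "b = c")
      case True
      then show ?thesis using lab ab by simp
    next
      case False
      then have lbc: "le b c" using h2 by simp
      have lac: "le a c" using trans[OF a b c lab lbc] .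
      have "a \<noteq> c"
      proof
        assume "a = c"
        then have "le c b" using lab by simp
        then have "b = c" using antisym[OF b c lbc] by blast
        then show False using False by simp
      qed
      then show ?thesis using lac by simp
    qed
  qed
  then show ?case using z by simp
qed

definition T where "T = res bt bt"

lemma T_in: "T \<in> A" unfolding T_def using res_in bt by blast
lemma le_T: "a \<in> A \<Longrightarrow> le a T"
proof -
  assume a: "a \<in> A"
  have "le (mult bt a) bt" using bt_mult[OF a] refl[OF bt] by simp
  then show ?thesis unfolding T_def using resid[OF bt bt a] by blast
qed

lemma top_ex: "\<exists>t. t \<in> L n \<and> (\<forall>y\<in>L n. lex_le le y t)"
proof (induction n)
  case 0 then show ?case by simp
next
  case (Suc n)
  then obtain t where t: "t \<in> L n" "\<forall>y\<in>L n. lex_le le y t" by blast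
  show ?case
  proof (cases "T \<in> noncanc A mult")
    case True
    have "\<forall>y\<in>L (Suc n). lex_le le y (T # replicate n bt)"
    proof
      fix y assume "y \<in> L (Suc n)"
      then obtain c y' where "y = c # y'" "c \<in> A" "c \<in> noncanc A mult \<Longrightarrow> y' = replicate n bt" by (rule Lex_SucE) blast
      then show "lex_le le y (T # replicate n bt)" using le_T True lex_le_refl by auto
    qed
    then show ?thesis using True by auto
  next
    case False
    then have Tc: "T \<in> canc A mult" using canc_or T_in by blast
    have "\<forall>y\<in>L (Suc n). lex_le le y (T # t)"
    proof
      fix y assume "y \<in> L (Suc n)"
      then obtain c y' where "y = c # y'" "c \<in> A" "y' \<in> L n" by (rule Lex_SucE) blast
      then show "lex_le le y (T # t)" using le_T t by auto
    qed
    then show ?thesis using Tc t by auto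
  qed
qed

lemma top_prop: "lex_top A le mult bt n \<in> L n \<and> (\<forall>y\<in>L n. lex_le le y (lex_top A le mult bt n))"
proof -
  have "\<exists>!t. t \<in> L n \<and> (\<forall>y\<in>L n. lex_le le y t)"
  proof -
    obtain t where t: "t \<in> L n \<and> (\<forall>y\<in>L n. lex_le le y t)" using top_ex by blast
    { fix s assume s: "s \<in> L n \<and> (\<forall>y\<in>L n. lex_le le y s)"
      then have "s = t" using t lex_antisym Lex_props by metis }
    then show ?thesis using t by blast
  qed
  then show ?thesis unfolding lex_top_def by (rule theI')
qed

lemma res_Lex: "a \<in> L k \<Longrightarrow> b \<in> L k \<Longrightarrow> lex_res A le mult res bt k a b \<in> L k"
proof (induction k arbitrary: a b)
  case 0 then show ?case by (simp add: lex_res_0)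
next
  case (Suc k)
  from Suc.prems(1) obtain a1 a' where a: "a = a1 # a'" "a1 \<in> A" "a' \<in> L k" by (rule Lex_SucE) blast
  from Suc.prems(2) obtain b1 b' where b: "b = b1 # b'" "b1 \<in> A" "b' \<in> L k" by (rule Lex_SucE) blast
  have r: "res a1 b1 \<in> A" using res_in a b by blast
  show ?case unfolding a b lex_res_Cons
    using Suc.IH[OF a(3) b(3)] top_prop[of k] canc_or[OF r] by auto
qed

lemma map2_rep_l: "length b' = k \<Longrightarrow> set b' \<subseteq> A \<Longrightarrow> map2 mult (replicate k bt) b' = replicate k bt"
  by (induction b' arbitrary: k) (auto simp: bt_mult)

lemma map2_rep_r: "length b' = k \<Longrightarrow> set b' \<subseteq> A \<Longrightarrow> map2 mult b' (replicate k bt) = replicate k bt"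
  by (induction b' arbitrary: k) (auto simp: bt_mult comm[of _ bt] bt)

lemma mult_Lex: "a \<in> L k \<Longrightarrow> b \<in> L k \<Longrightarrow> map2 mult a b \<in> L k"
proof (induction k arbitrary: a b)
  case 0 then show ?case by simp
next
  case (Suc k)
  from Suc.prems(1) obtain a1 a' where a: "a = a1 # a'" "a1 \<in> A" "a' \<in> L k"
    "a1 \<in> noncanc A mult \<Longrightarrow> a' = replicate k bt" "a1 \<notin> noncanc A mult \<Longrightarrow> a1 \<in> canc A mult" by (rule Lex_SucE) blast
  from Suc.prems(2) obtain b1 b' where b: "b = b1 # b'" "b1 \<in> A" "b' \<in> L k"
    "b1 \<in> noncanc A mult \<Longrightarrow> b' = replicate k bt" "b1 \<notin> noncanc A mult \<Longrightarrow> b1 \<in> canc A mult" by (rule Lex_SucE) blast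
  have lb: "length b' = k" "set b' \<subseteq> A" using Lex_props b by auto
  have la: "length a' = k" "set a' \<subseteq> A" using Lex_props a by auto
  have m1: "map2 mult (replicate k bt) b' = replicate k bt"
    using lb map2_rep_l by blast
  have m2: "map2 mult a' (replicate k bt) = replicate k bt"
    using la map2_rep_r by blast
  show ?case
  proof (cases "a1 \<in> noncanc A mult")
    case True
    then show ?thesis using a b m1 noncanc_mult by auto
  next
    case F: False
    show ?thesis
    proof (cases "b1 \<in> noncanc A mult")
      case True
      have "mult a1 b1 = mult b1 a1" using comm a b by blast
      then show ?thesis using a b m2 noncanc_mult True by auto
    next
      case False
      then show ?thesis using a b F canc_mult Suc.IH by auto
    qed
  qed
qed

lemma resid_Lex: "a \<in> L k \<Longrightarrow> b \<in> L k \<Longrightarrow> c \<in> L k \<Longrightarrow>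
  lex_le le (map2 mult b c) a \<longleftrightarrow> lex_le le c (lex_res A le mult res bt k a b)"
proof (induction k arbitrary: a b c)
  case 0 then show ?case by (simp add: lex_res_0)
next
  case (Suc k)
  from Suc.prems(1) obtain a1 a' where a: "a = a1 # a'" "a1 \<in> A" "a' \<in> L k" by (rule Lex_SucE) blast
  from Suc.prems(2) obtain b1 b' where b: "b = b1 # b'" "b1 \<in> A" "b' \<in> L k"
    "b1 \<in> noncanc A mult \<Longrightarrow> b' = replicate k bt" "b1 \<notin> noncanc A mult \<Longrightarrow> b1 \<in> canc A mult" by (rule Lex_SucE) blast
  from Suc.prems(3) obtain c1 c' where c: "c = c1 # c'" "c1 \<in> A" "c' \<in> L k"
    "c1 \<in> noncanc A mult \<Longrightarrow> c' = replicate k bt" "c1 \<notin> noncanc A mult \<Longrightarrow> c1 \<in> canc A mult" by (rule Lex_SucE) blast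
  define r1 where "r1 = res a1 b1"
  define p1 where "p1 = mult b1 c1"
  define Y where "Y = lex_le le (map2 mult b' c') a'"
  have r1A: "r1 \<in> A" unfolding r1_def using res_in a b by blast
  have p1A: "p1 \<in> A" unfolding p1_def using mult_in b c by blast
  have la: "length a' = k" "set a' \<subseteq> A" using Lex_props a by auto
  have lb: "length b' = k" "set b' \<subseteq> A" using Lex_props b by auto
  have lc: "length c' = k" "set c' \<subseteq> A" using Lex_props c by auto
  have key: "le p1 a1 \<longleftrightarrow> le c1 r1" unfolding p1_def r1_def using resid a b c by blast
  have p1c: "p1 = mult c1 b1" unfolding p1_def using comm b c by blast
  have rb: "le (mult r1 b1) a1" unfolding r1_def using res_mult a b by blast
  have rbA: "mult r1 b1 \<in> A" using mult_in r1A b by blast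
  have mon: "le c1 r1 \<Longrightarrow> le p1 (mult r1 b1)" unfolding p1c using mono c r1A b by blast
  have Ybc: "b1 \<in> noncanc A mult \<or> c1 \<in> noncanc A mult \<Longrightarrow> Y"
    unfolding Y_def using b c map2_rep_l[OF lc] map2_rep_r[OF lb] rep_le[OF la] by auto
  have canc_b: "b1 \<in> canc A mult \<Longrightarrow> mult x b1 = mult y b1 \<Longrightarrow> x \<in> A \<Longrightarrow> y \<in> A \<Longrightarrow> x = y" for x y
    unfolding canc_def by blast
  have LHS: "lex_le le (map2 mult b c) a \<longleftrightarrow> (le p1 a1 \<and> p1 \<noteq> a1) \<or> (p1 = a1 \<and> Y)"
    unfolding a b c p1_def Y_def by simp
  show ?case
  proof (cases "r1 \<in> noncanc A mult")
    case True
    have RHS: "lex_le le c (lex_res A le mult res bt (Suc k) a b) \<longleftrightarrow> le c1 r1"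
      unfolding a b c lex_res_Cons r1_def[symmetric] using True c(4) lex_le_refl refl[OF c(2)] by auto
    have "p1 = a1 \<Longrightarrow> le p1 a1 \<Longrightarrow> Y"
    proof -
      assume e: "p1 = a1" and l: "le p1 a1"
      show Y
      proof (cases "b1 \<in> noncanc A mult \<or> c1 \<in> noncanc A mult")
        case True then show ?thesis by (rule Ybc)
      next
        case False
        then have "le p1 (mult r1 b1)" using mon key l by blast
        then have "mult r1 b1 = p1" using antisym[OF rbA p1A] rb e by blast
        then have "r1 = c1" using canc_b[of r1 c1] False b(5) p1c r1A c(2) by metis
        then show ?thesis using True False by blast
      qed
    qed
    then show ?thesis using LHS RHS key refl[OF p1A] by blast
  next
    case rc: False
    show ?thesis
    proof (cases "le (mult r1 b1) a1 \<and> mult r1 b1 \<noteq> a1")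
      case True
      have RHS: "lex_le le c (lex_res A le mult res bt (Suc k) a b) \<longleftrightarrow> le c1 r1"
        unfolding a b c lex_res_Cons r1_def[symmetric] using True rc top_prop[of k] c(3) refl[OF c(2)] by auto
      have "p1 = a1 \<Longrightarrow> le c1 r1 \<Longrightarrow> False"
      proof -
        assume e: "p1 = a1" "le c1 r1"
        then have "le a1 (mult r1 b1)" using mon by blast
        then show False using True antisym[OF rbA a(2)] by blast
      qed
      then show ?thesis using LHS RHS key refl[OF p1A] by blast
    next
      case False
      then have rbe: "mult r1 b1 = a1" using rb by blast
      have RHS: "lex_le le c (lex_res A le mult res bt (Suc k) a b) \<longleftrightarrow>
          (le c1 r1 \<and> c1 \<noteq> r1) \<or> (c1 = r1 \<and> Y)"
        unfolding a b c lex_res_Cons r1_def[symmetric] using False rc Suc.IH[OF a(3) b(3) c(3)]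
        unfolding Y_def by auto
      show ?thesis
      proof (cases "b1 \<in> noncanc A mult")
        case True
        then have "Y" using Ybc by blast
        then show ?thesis using LHS RHS key refl[OF p1A] refl[OF c(2)] by blast
      next
        case bc: False
        have "p1 = a1 \<longleftrightarrow> c1 = r1"
        proof
          assume "p1 = a1"
          then show "c1 = r1" using canc_b[of c1 r1] b(5)[OF bc] p1c rbe c(2) r1A by metis
        next
          assume "c1 = r1"
          then show "p1 = a1" using p1c rbe by simp
        qed
        then show ?thesis using LHS RHS key by blast
      qed
    qed
  qed
qed

lemma map2_assoc: "length a = length b \<Longrightarrow> length b = length c \<Longrightarrow> set a \<subseteq> A \<Longrightarrow> set b \<subseteq> A \<Longrightarrow> set c \<subseteq> A \<Longrightarrow>
  map2 mult (map2 mult a b) c = map2 mult a (map2 mult b c)"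
proof (induction a arbitrary: b c)
  case Nil then show ?case by simp
next
  case (Cons x a)
  obtain y b' where y: "b = y # b'" using Cons.prems(1) by (cases b) auto
  obtain z c' where z: "c = z # c'" using Cons.prems(2) y by (cases c) auto
  have "mult (mult x y) z = mult x (mult y z)" using assoc Cons.prems(3,4,5) y z by simp
  moreover have "map2 mult (map2 mult a b') c' = map2 mult a (map2 mult b' c')"
    using Cons.IH[of b' c'] Cons.prems y z by simp
  ultimately show ?case using y z by simp
qed

lemma map2_comm: "length a = length b \<Longrightarrow> set a \<subseteq> A \<Longrightarrow> set b \<subseteq> A \<Longrightarrow>
  map2 mult a b = map2 mult b a"
proof (induction a arbitrary: b)
  case Nil then show ?case by simp
next
  case (Cons x a)
  obtain y b' where y: "b = y # b'" using Cons.prems(1) by (cases b) auto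
  have "mult x y = mult y x" using comm Cons.prems(2,3) y by simp
  moreover have "map2 mult a b' = map2 mult b' a"
    using Cons.IH[of b'] Cons.prems y by simp
  ultimately show ?case using y by simp
qed

lemma map2_unit: "set a \<subseteq> A \<Longrightarrow> map2 mult (replicate (length a) one) a = a"
  by (induction a) (auto simp: unit)

lemma one_canc: "one \<in> canc A mult"
proof -
  { fix a b assume a: "a \<in> A" and b: "b \<in> A" and e: "mult a one = mult b one"
    have "a = mult one a" using unit[OF a] by (rule sym)
    also have "\<dots> = mult a one" using comm[OF one_in a] .
    also have "\<dots> = mult b one" using e .
    also have "\<dots> = mult one b" using comm[OF b one_in] .
    also have "\<dots> = b" using unit[OF b] .
    finally have "a = b" . }
  then show ?thesis unfolding canc_def using one_in by blast
qed

lemma rep_one: "replicate k one \<in> L k"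
  by (induction k) (auto simp: one_canc)

end

theorem theorem2:
  fixes A :: "'a set" and le :: "'a \<Rightarrow> 'a \<Rightarrow> bool"
    and mult res :: "'a \<Rightarrow> 'a \<Rightarrow> 'a" and one bt :: 'a and k :: nat
  assumes "rpom A le mult res one"
    and "bt \<in> A" and "\<forall>a\<in>A. le bt a"
    and "k \<ge> 1"
  shows "rpom (Lex A mult bt k) (lex_le le) (map2 mult) (lex_res A le mult res bt k)
           (replicate k one)"
proof -
  interpret rp A le mult res one bt using assms(1,2,3) by unfold_locales
  have P: "x \<in> L k \<Longrightarrow> length x = k \<and> set x \<subseteq> A" for x by (rule Lex_props)
  have c1: "\<forall>a\<in>L k. lex_le le a a" using lex_le_refl by blast
  have c2: "\<forall>a\<in>L k. \<forall>b\<in>L k. lex_le le a b \<and> lex_le le b a \<longrightarrow> a = b"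
  proof (intro ballI impI)
    fix a b assume ab: "a \<in> L k" "b \<in> L k" and h: "lex_le le a b \<and> lex_le le b a"
    have pa: "length a = k" "set a \<subseteq> A" using P[OF ab(1)] by auto
    have pb: "length b = k" "set b \<subseteq> A" using P[OF ab(2)] by auto
    show "a = b" using lex_antisym[of a b] pa pb h by simp
  qed
  have c3: "\<forall>a\<in>L k. \<forall>b\<in>L k. \<forall>c\<in>L k. lex_le le a b \<and> lex_le le b c \<longrightarrow> lex_le le a c"
  proof (intro ballI impI)
    fix a b c assume abc: "a \<in> L k" "b \<in> L k" "c \<in> L k" and h: "lex_le le a b \<and> lex_le le b c"
    have pa: "length a = k" "set a \<subseteq> A" using P[OF abc(1)] by auto
    have pb: "length b = k" "set b \<subseteq> A" using P[OF abc(2)] by auto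
    have pc: "length c = k" "set c \<subseteq> A" using P[OF abc(3)] by auto
    show "lex_le le a c" using lex_trans[of a b c] pa pb pc h by simp
  qed
  have c7: "\<forall>a\<in>L k. \<forall>b\<in>L k. \<forall>c\<in>L k. map2 mult (map2 mult a b) c = map2 mult a (map2 mult b c)"
  proof (intro ballI)
    fix a b c assume abc: "a \<in> L k" "b \<in> L k" "c \<in> L k"
    have pa: "length a = k" "set a \<subseteq> A" using P[OF abc(1)] by auto
    have pb: "length b = k" "set b \<subseteq> A" using P[OF abc(2)] by auto
    have pc: "length c = k" "set c \<subseteq> A" using P[OF abc(3)] by auto
    show "map2 mult (map2 mult a b) c = map2 mult a (map2 mult b c)"
      using map2_assoc[of a b c] pa pb pc by simp
  qed
  have c8: "\<forall>a\<in>L k. \<forall>b\<in>L k. map2 mult a b = map2 mult b a"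
  proof (intro ballI)
    fix a b assume ab: "a \<in> L k" "b \<in> L k"
    have pa: "length a = k" "set a \<subseteq> A" using P[OF ab(1)] by auto
    have pb: "length b = k" "set b \<subseteq> A" using P[OF ab(2)] by auto
    show "map2 mult a b = map2 mult b a" using map2_comm[of a b] pa pb by simp
  qed
  have c9: "\<forall>a\<in>L k. map2 mult (replicate k one) a = a"
  proof
    fix a assume a: "a \<in> L k"
    have pa: "length a = k" "set a \<subseteq> A" using P[OF a] by auto
    show "map2 mult (replicate k one) a = a" using map2_unit[of a] pa by simp
  qed
  have c5: "\<forall>a\<in>L k. \<forall>b\<in>L k. map2 mult a b \<in> L k" using mult_Lex by blast
  have c6: "\<forall>a\<in>L k. \<forall>b\<in>L k. lex_res A le mult res bt k a b \<in> L k" using res_Lex by blast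
  have c10: "\<forall>a\<in>L k. \<forall>b\<in>L k. \<forall>c\<in>L k. lex_le le (map2 mult b c) a \<longleftrightarrow> lex_le le c (lex_res A le mult res bt k a b)"
    using resid_Lex by blast
  show ?thesis unfolding rpom_def
    by (rule conjI[OF c1 conjI[OF c2 conjI[OF c3 conjI[OF rep_one conjI[OF c5 conjI[OF c6
       conjI[OF c7 conjI[OF c8 conjI[OF c9 c10]]]]]]]]])
qed

end
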